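(* If $p=p(n)\le \log n/(25n^2)$, then asymptotically almost surely there exists a generator $s\in S$ such that neither $s$ nor $s^{-1}$ occurs in any relation of the random presentation $\Gamma(n,p)=\langle S\mid R\rangle$.
   Context: The random triangular group $\Gamma(n,p)$ is given by a presentation $\langle S\mid R\rangle$, where $|S|=n$ and $R$ contains independently, each with probability $p$, every cyclically reduced word $abc$ of length three over $S\cup S^{-1}$ ($a\neq b^{-1}$, $b\neq c^{-1}$, $c\neq a^{-1}$; distinct words are distinct candidates). Asymptotically almost surely means with probability tending to $1$ as $n\to\infty$. *)

theory Defs
  imports "HOL-Probability.Probability"
begin

text \<open>A letter over S \<union> S^{-1} with S = {0..<n}: (s, False) is the generator s,
  (s, True) is its inverse.\<close>
type_synonym letter = "nat \<times> bool"

definition inv_letter :: "letter \<Rightarrow> letter" where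
  "inv_letter x = (fst x, \<not> snd x)"

definition letters :: "nat \<Rightarrow> letter set" where
  "letters n = {0..<n} \<times> UNIV"

definition tri_words :: "nat \<Rightarrow> (letter \<times> letter \<times> letter) set" where
  "tri_words n = {(a, b, c). a \<in> letters n \<and> b \<in> letters n \<and> c \<in> letters n \<and>
      a \<noteq> inv_letter b \<and> b \<noteq> inv_letter c \<and> c \<noteq> inv_letter a}"

text \<open>The random relator set: each candidate word is included independently with
  probability p; an outcome X encodes R = {w \<in> tri_words n. X w}.\<close>
definition random_triangular :: "nat \<Rightarrow> real \<Rightarrow> (letter \<times> letter \<times> letter \<Rightarrow> bool) pmf" where
  "random_triangular n p = Pi_pmf (tri_words n) False (\<lambda>_. bernoulli_pmf p)"

definition relators :: "nat \<Rightarrow> (letter \<times> letter \<times> letter \<Rightarrow> bool) \<Rightarrow> (letter \<times> letter \<times> letter) set" where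
  "relators n X = {w \<in> tri_words n. X w}"

definition gen_occurs :: "nat \<Rightarrow> letter \<times> letter \<times> letter \<Rightarrow> bool" where
  "gen_occurs s w = (case w of (a, b, c) \<Rightarrow>
      a \<in> {(s, False), (s, True)} \<or> b \<in> {(s, False), (s, True)} \<or> c \<in> {(s, False), (s, True)})"

end

theory Submission
  imports Defs "HOL-Real_Asymp.Real_Asymp"
begin

definition W :: "nat \<Rightarrow> nat \<Rightarrow> (letter \<times> letter \<times> letter) set" where
  "W n s = {w\<in>tri_words n. gen_occurs s w}"

lemma finite_letters[simp]: "finite (letters n)"
  by (simp add: letters_def)

lemma card_letters[simp]: "card (letters n) = 2 * n"
  by (simp add: letters_def card_cartesian_product card_UNIV_bool)

lemma tri_sub: "tri_words n \<subseteq> letters n \<times> letters n \<times> letters n"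
  by (auto simp: tri_words_def)

lemma finite_tri[simp]: "finite (tri_words n)"
  by (rule finite_subset[OF tri_sub]) auto

lemma W_sub: "W n s \<subseteq> tri_words n" by (auto simp: W_def)

lemma gen_occurs_iff: "gen_occurs s (a,b,c) \<longleftrightarrow> fst a = s \<or> fst b = s \<or> fst c = s"
  by (cases a; cases b; cases c) (auto simp: gen_occurs_def)

lemma card_G[simp]: "card ({s::nat} \<times> (UNIV::bool set)) = 2"
  by (simp add: card_cartesian_product card_UNIV_bool)

lemma card_W: "card (W n s) \<le> 24 * n^2"
proof -
  define G where "G = {s} \<times> (UNIV::bool set)"
  define L where "L = letters n"
  have "W n s \<subseteq> (G \<times> L \<times> L) \<union> (L \<times> G \<times> L) \<union> (L \<times> L \<times> G)"
    by (auto simp: W_def G_def L_def tri_words_def gen_occurs_iff)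
  hence "card (W n s) \<le> card ((G \<times> L \<times> L) \<union> (L \<times> G \<times> L) \<union> (L \<times> L \<times> G))"
    by (intro card_mono) (auto simp: G_def L_def)
  also have "\<dots> \<le> card (G \<times> L \<times> L) + card (L \<times> G \<times> L) + card (L \<times> L \<times> G)"
    by (meson card_Un_le add_right_mono le_trans)
  also have "\<dots> = 24 * n^2"
    by (simp add: card_cartesian_product G_def L_def power2_eq_square)
  finally show ?thesis .
qed

lemma card_W_inter: assumes "s \<noteq> t" shows "card (W n s \<inter> W n t) \<le> 48 * n"
proof -
  define G where "G = {s} \<times> (UNIV::bool set)"
  define H where "H = {t} \<times> (UNIV::bool set)"
  define L where "L = letters n"
  have "W n s \<inter> W n t \<subseteq> ((G \<times> H \<times> L) \<union> (G \<times> L \<times> H)) \<union> ((H \<times> G \<times> L) \<union> (L \<times> G \<times> H))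
       \<union> ((H \<times> L \<times> G) \<union> (L \<times> H \<times> G))"
  proof
    fix w assume w: "w \<in> W n s \<inter> W n t"
    obtain a b c where wd: "w = (a, b, c)" by (cases w) auto
    have L: "a \<in> L" "b \<in> L" "c \<in> L" using w by (auto simp: wd W_def tri_words_def L_def)
    have o1: "fst a = s \<or> fst b = s \<or> fst c = s" using w by (simp add: wd W_def gen_occurs_iff)
    have o2: "fst a = t \<or> fst b = t \<or> fst c = t" using w by (simp add: wd W_def gen_occurs_iff)
    have Gi: "x \<in> G \<longleftrightarrow> fst x = s" "x \<in> H \<longleftrightarrow> fst x = t" for x :: letter
      by (cases x; simp add: G_def H_def)+
    show "w \<in> ((G \<times> H \<times> L) \<union> (G \<times> L \<times> H)) \<union> ((H \<times> G \<times> L) \<union> (L \<times> G \<times> H))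
       \<union> ((H \<times> L \<times> G) \<union> (L \<times> H \<times> G))"
      unfolding wd using o1 o2 L assms by (elim disjE) (simp_all add: Gi)
  qed
  hence "card (W n s \<inter> W n t) \<le> card (((G \<times> H \<times> L) \<union> (G \<times> L \<times> H)) \<union> ((H \<times> G \<times> L) \<union> (L \<times> G \<times> H))
       \<union> ((H \<times> L \<times> G) \<union> (L \<times> H \<times> G)))"
    by (intro card_mono) (auto simp: G_def H_def L_def)
  also have "\<dots> \<le> (card (G \<times> H \<times> L) + card (G \<times> L \<times> H)) + (card (H \<times> G \<times> L) + card (L \<times> G \<times> H))
       + (card (H \<times> L \<times> G) + card (L \<times> H \<times> G))"
    by (meson card_Un_le add_mono le_trans)
  also have "\<dots> = 48 * n"
    by (simp add: card_cartesian_product G_def H_def L_def)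
  finally show ?thesis .
qed

lemma prob_avoid:
  assumes "0 \<le> p" "p \<le> 1" "C \<subseteq> tri_words n"
  shows "measure_pmf.prob (random_triangular n p) {X. \<forall>w\<in>C. \<not> X w} = (1 - p) ^ card C"
proof -
  have eq: "{X. \<forall>w\<in>C. \<not> X w} = Pi (tri_words n) (\<lambda>w. if w \<in> C then {False} else UNIV)"
    using assms(3) by (auto simp: Pi_def)
  have "measure_pmf.prob (random_triangular n p) {X. \<forall>w\<in>C. \<not> X w}
     = (\<Prod>w\<in>tri_words n. measure_pmf.prob (bernoulli_pmf p) (if w \<in> C then {False} else UNIV))"
    unfolding eq random_triangular_def by (rule measure_Pi_pmf_Pi) simp
  also have "\<dots> = (\<Prod>w\<in>tri_words n. if w \<in> C then 1 - p else 1)"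
    using assms by (intro prod.cong) (auto simp: measure_pmf_single)
  also have "\<dots> = (1 - p) ^ card C"
    using assms(3) by (simp add: prod.If_cases Int_absorb1 Int_absorb2 [of C] inf.absorb2)
  finally show ?thesis .
qed

lemma finite_supp: "finite {X :: letter \<times> letter \<times> letter \<Rightarrow> bool. \<forall>x. x \<notin> tri_words n \<longrightarrow> X x = False}"
proof -
  have "{X :: letter \<times> letter \<times> letter \<Rightarrow> bool. \<forall>x. x \<notin> tri_words n \<longrightarrow> X x = False}
        \<subseteq> (\<lambda>B x. x \<in> B) ` Pow (tri_words n)"
  proof
    fix X :: "letter \<times> letter \<times> letter \<Rightarrow> bool"
    assume "X \<in> {X. \<forall>x. x \<notin> tri_words n \<longrightarrow> X x = False}"
    hence h: "\<And>x. x \<notin> tri_words n \<Longrightarrow> \<not> X x" by auto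
    have "X = (\<lambda>x. x \<in> {x\<in>tri_words n. X x})"
    proof (rule ext)
      fix x show "X x = (x \<in> {x\<in>tri_words n. X x})" using h[of x] by auto
    qed
    thus "X \<in> (\<lambda>B x. x \<in> B) ` Pow (tri_words n)" by blast
  qed
  thus ?thesis by (rule finite_subset) simp
qed

lemma prob_sum:
  fixes M :: "'a pmf"
  assumes "finite S" "set_pmf M \<subseteq> S"
  shows "measure_pmf.prob M E = (\<Sum>X\<in>S. indicator E X * pmf M X)"
proof -
  have "measure_pmf.prob M E = (\<integral>x. indicator E x \<partial>measure_pmf M)"
    by simp
  also have "\<dots> = (\<Sum>X\<in>S. indicator E X * pmf M X)"
    using assms by (intro integral_measure_pmf_real) auto
  finally show ?thesis .
qed

lemma core:
  fixes n :: nat and p :: real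
  assumes p0: "0 \<le> p" and p1: "p < 1"
  defines "\<mu> \<equiv> (\<Sum>s<n. (1 - p) ^ card (W n s))"
  defines "q \<equiv> (1 - p) ^ (48 * n)"
  assumes mupos: "\<mu> > 0"
  shows "measure_pmf.prob (random_triangular n p) {X. \<not> (\<exists>s<n. \<forall>w\<in>relators n X. \<not> gen_occurs s w)}
          \<le> 1 / \<mu> + 1 / q - 1"
proof -
  define M where "M = random_triangular n p"
  define S where "S = {X :: letter \<times> letter \<times> letter \<Rightarrow> bool. \<forall>x. x \<notin> tri_words n \<longrightarrow> X x = False}"
  have finS: "finite S" unfolding S_def by (rule finite_supp)
  have supp: "set_pmf M \<subseteq> S" unfolding M_def S_def random_triangular_def
    by (rule set_Pi_pmf_subset) simp
  define \<pi> where "\<pi> = pmf M"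
  have pi0: "\<And>X. \<pi> X \<ge> 0" by (simp add: \<pi>_def)
  have sum1: "(\<Sum>X\<in>S. \<pi> X) = 1" unfolding \<pi>_def by (rule sum_pmf_eq_1[OF finS supp])
  define E where "E s = {X. \<forall>w\<in>W n s. \<not> X w}" for s
  define I where "I s X = (indicator (E s) X :: real)" for s X
  define N where "N X = (\<Sum>s<n. I s X)" for X
  define P where "P s = (1 - p) ^ card (W n s)" for s
  have probE: "(\<Sum>X\<in>S. I s X * \<pi> X) = P s" for s
  proof -
    have "(\<Sum>X\<in>S. I s X * \<pi> X) = measure_pmf.prob M (E s)"
      unfolding I_def \<pi>_def by (rule prob_sum[OF finS supp, symmetric])
    also have "\<dots> = P s" unfolding M_def E_def P_def
      by (rule prob_avoid) (use p0 p1 W_sub in auto)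
    finally show ?thesis .
  qed
  have probEE: "(\<Sum>X\<in>S. I s X * I t X * \<pi> X) = (1 - p) ^ card (W n s \<union> W n t)" for s t
  proof -
    have "(\<Sum>X\<in>S. I s X * I t X * \<pi> X) = measure_pmf.prob M (E s \<inter> E t)"
      unfolding I_def \<pi>_def by (subst prob_sum[OF finS supp]) (simp add: indicator_inter_arith)
    also have "E s \<inter> E t = {X. \<forall>w\<in>W n s \<union> W n t. \<not> X w}" by (auto simp: E_def)
    also have "measure_pmf.prob M \<dots> = (1 - p) ^ card (W n s \<union> W n t)" unfolding M_def
      by (rule prob_avoid) (use p0 p1 W_sub in auto)
    finally show ?thesis .
  qed
  have mu_eq: "\<mu> = (\<Sum>s<n. P s)" by (simp add: \<mu>_def P_def)
  have qpos: "q > 0" using p1 by (simp add: q_def)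
  have q1: "q \<le> 1" using p0 p1 by (simp add: q_def power_le_one)
  have P0: "P s \<ge> 0" for s using p1 by (simp add: P_def)
  have bound: "(1 - p) ^ card (W n s \<union> W n t) \<le> (if s = t then P s else 0) + P s * P t / q" for s t
  proof (cases "s = t")
    case True
    thus ?thesis using P0[of s] qpos by (simp add: P_def)
  next
    case False
    have fin: "finite (W n s)" "finite (W n t)" by (auto intro: finite_subset[OF W_sub])
    have cu: "card (W n s) + card (W n t) = card (W n s \<union> W n t) + card (W n s \<inter> W n t)"
      using card_Un_Int[OF fin] .
    have "P s * P t = (1 - p) ^ card (W n s \<union> W n t) * (1 - p) ^ card (W n s \<inter> W n t)"
      by (simp add: P_def cu power_add[symmetric])
    also have "(1 - p) ^ card (W n s \<inter> W n t) \<ge> q"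
      unfolding q_def using p0 p1 card_W_inter[OF False, of n]
      by (intro power_decreasing) auto
    hence "(1 - p) ^ card (W n s \<union> W n t) * q \<le> (1 - p) ^ card (W n s \<union> W n t) * (1 - p) ^ card (W n s \<inter> W n t)"
      using p1 by (intro mult_left_mono) auto
    finally have "(1 - p) ^ card (W n s \<union> W n t) \<le> P s * P t / q"
      using qpos by (simp add: pos_le_divide_eq)
    thus ?thesis using False by simp
  qed
  have EN: "(\<Sum>X\<in>S. N X * \<pi> X) = \<mu>"
    unfolding N_def mu_eq by (simp add: sum_distrib_right probE[symmetric] sum.swap[of _ S])
  have EN2: "(\<Sum>X\<in>S. N X * N X * \<pi> X) \<le> \<mu> + \<mu> * \<mu> / q"
  proof -
    have "(\<Sum>X\<in>S. N X * N X * \<pi> X) = (\<Sum>s<n. \<Sum>t<n. \<Sum>X\<in>S. I s X * I t X * \<pi> X)"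
    proof -
      have "N X * N X * \<pi> X = (\<Sum>s<n. \<Sum>t<n. I s X * I t X * \<pi> X)" for X
        unfolding N_def by (subst sum.swap) (simp add: sum_distrib_left sum_distrib_right mult.assoc)
      hence "(\<Sum>X\<in>S. N X * N X * \<pi> X) = (\<Sum>X\<in>S. \<Sum>s<n. \<Sum>t<n. I s X * I t X * \<pi> X)"
        by simp
      also have "\<dots> = (\<Sum>s<n. \<Sum>X\<in>S. \<Sum>t<n. I s X * I t X * \<pi> X)"
        by (rule sum.swap)
      also have "\<dots> = (\<Sum>s<n. \<Sum>t<n. \<Sum>X\<in>S. I s X * I t X * \<pi> X)"
        by (intro sum.cong refl sum.swap)
      finally show ?thesis .
    qed
    also have "\<dots> = (\<Sum>s<n. \<Sum>t<n. (1 - p) ^ card (W n s \<union> W n t))"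
      by (simp add: probEE)
    also have "\<dots> \<le> (\<Sum>s<n. \<Sum>t<n. (if s = t then P s else 0) + P s * P t / q)"
      by (intro sum_mono bound)
    also have "\<dots> = \<mu> + \<mu> * \<mu> / q"
    proof -
      have a: "(\<Sum>s<n. \<Sum>t<n. P s * P t / q) = \<mu> * \<mu> / q"
        by (simp add: mu_eq sum_product sum_divide_distrib)
      have b: "(\<Sum>s<n. \<Sum>t<n. (if s = t then P s else 0)) = \<mu>"
        by (subst mu_eq) simp
      show ?thesis using a b by (simp add: sum.distrib mu_eq)
    qed
    finally show ?thesis .
  qed
  define Z where "Z = {X. \<not> (\<exists>s<n. \<forall>w\<in>relators n X. \<not> gen_occurs s w)}"
  have ZI: "indicator Z X \<le> (N X - \<mu>)^2 / \<mu>^2" for X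
  proof (cases "X \<in> Z")
    case True
    have "I s X = 0" if "s < n" for s
    proof -
      have "\<not> (\<forall>w\<in>relators n X. \<not> gen_occurs s w)" using True that by (simp add: Z_def)
      then obtain w where w: "w \<in> relators n X" "gen_occurs s w" by blast
      hence "w \<in> W n s" "X w" by (auto simp: relators_def W_def)
      hence "X \<notin> E s" by (auto simp: E_def)
      thus ?thesis by (simp add: I_def)
    qed
    hence "N X = 0" by (simp add: N_def)
    thus ?thesis using True mupos by simp
  next
    case False thus ?thesis by simp
  qed
  have "measure_pmf.prob M Z = (\<Sum>X\<in>S. indicator Z X * \<pi> X)"
    unfolding \<pi>_def by (rule prob_sum[OF finS supp])
  also have "\<dots> \<le> (\<Sum>X\<in>S. (N X - \<mu>)^2 / \<mu>^2 * \<pi> X)"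
    by (intro sum_mono mult_right_mono ZI pi0)
  also have "\<dots> = ((\<Sum>X\<in>S. N X * N X * \<pi> X) - 2 * \<mu> * (\<Sum>X\<in>S. N X * \<pi> X) + \<mu>^2 * (\<Sum>X\<in>S. \<pi> X)) / \<mu>^2"
    by (simp add: sum_divide_distrib[symmetric] sum_subtractf sum.distrib sum_distrib_left
        power2_eq_square algebra_simps)
  also have "\<dots> \<le> (\<mu> + \<mu> * \<mu> / q - \<mu>^2) / \<mu>^2"
    using EN2 by (simp add: EN sum1 divide_right_mono power2_eq_square)
  also have "\<dots> = 1 / \<mu> + 1 / q - 1"
    using mupos qpos by (simp add: field_simps power2_eq_square)
  finally show ?thesis unfolding M_def Z_def .
qed

lemma pow_lower:
  fixes p :: real assumes "0 \<le> p" "p < 1"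
  shows "(1 - p) ^ m \<ge> exp (- (real m * p / (1 - p)))"
proof -
  have "ln (1 / (1 - p)) \<le> 1 / (1 - p) - 1" using assms by (intro ln_le_minus_one) auto
  also have "\<dots> = p / (1 - p)" using assms by (simp add: field_simps)
  finally have l: "ln (1 - p) \<ge> - (p / (1 - p))" using assms by (simp add: ln_div)
  have "(1 - p) ^ m = exp (real m * ln (1 - p))" using assms by (simp add: exp_ln ln_realpow[symmetric])
  also have "\<dots> \<ge> exp (- (real m * p / (1 - p)))"
    using mult_left_mono[OF l, of "real m"] by simp
  finally show ?thesis .
qed

lemma per_n:
  fixes n :: nat and p :: real
  assumes n1: "n \<ge> 1" and p0: "0 \<le> p" and pb: "p \<le> ln n / (25 * (real n)^2)"
    and s1: "ln n / (25 * (real n)^2) \<le> 1/50" and s2: "48 * ln n / (25 * n) < 1"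
  shows "measure_pmf.prob (random_triangular n p) {X. \<exists>s<n. \<forall>w\<in>relators n X. \<not> gen_occurs s w}
     \<ge> 2 - 1 / (n * exp (- (48/49) * ln n)) - 1 / (1 - 48 * ln n / (25 * n))"
proof -
  define \<mu> where "\<mu> = (\<Sum>s<n. (1 - p) ^ card (W n s))"
  define q where "q = (1 - p) ^ (48 * n)"
  define f where "f = real n * exp (- (48/49) * ln n)"
  define g where "g = 48 * ln n / (25 * n)"
  have p1: "p \<le> 1/50" using pb s1 by linarith
  have nr: "real n > 0" using n1 by simp
  have "(1 - p) ^ (24 * n^2) \<ge> exp (- (real (24 * n^2) * p / (1 - p)))"
    using p0 p1 by (intro pow_lower) auto
  moreover have "real (24 * n^2) * p / (1 - p) \<le> (48/49) * ln n"
  proof -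
    have "real (24 * n^2) * p / (1 - p) \<le> real (24 * n^2) * p * (50/49)"
    proof -
      have "1 / (1 - p) \<le> 50/49" using p1 by (simp add: field_simps)
      hence "real (24 * n^2) * p * (1 / (1 - p)) \<le> real (24 * n^2) * p * (50/49)"
        using p0 by (intro mult_left_mono) auto
      thus ?thesis by simp
    qed
    also have "\<dots> \<le> real (24 * n^2) * (ln n / (25 * (real n)^2)) * (50/49)"
      using pb by (intro mult_right_mono mult_left_mono) auto
    also have "\<dots> = (48/49) * ln n" using nr by (simp add: field_simps)
    finally show ?thesis .
  qed
  ultimately have pw: "(1 - p) ^ (24 * n^2) \<ge> exp (- (48/49) * ln n)"
  proof -
    assume a: "(1 - p) ^ (24 * n^2) \<ge> exp (- (real (24 * n^2) * p / (1 - p)))"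
      and b: "real (24 * n^2) * p / (1 - p) \<le> (48/49) * ln n"
    have "exp (- (48/49) * ln n) \<le> exp (- (real (24 * n^2) * p / (1 - p)))"
      using b by simp
    thus ?thesis using a by linarith
  qed
  have "\<mu> \<ge> (\<Sum>s<n. (1 - p) ^ (24 * n^2))" unfolding \<mu>_def
    using p0 p1 card_W by (intro sum_mono power_decreasing) auto
  moreover have "real n * exp (- (48/49) * ln n) \<le> real n * (1 - p) ^ (24 * n^2)"
    by (rule mult_left_mono[OF pw]) simp
  ultimately have muf: "\<mu> \<ge> f" unfolding f_def by simp
  have fpos: "f > 0" using nr by (simp add: f_def)
  have mupos: "\<mu> > 0" using muf fpos by linarith
  have "q \<ge> 1 + real (48 * n) * (- p)" unfolding q_def
    using Bernoulli_inequality[of "-p" "48 * n"] p1 by simp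
  moreover have "real (48 * n) * p \<le> g"
  proof -
    have "real (48 * n) * p \<le> real (48 * n) * (ln n / (25 * (real n)^2))"
      using pb by (intro mult_left_mono) auto
    also have "\<dots> = g" using nr by (simp add: g_def field_simps power2_eq_square)
    finally show ?thesis .
  qed
  ultimately have qg: "q \<ge> 1 - g" by simp
  have g1: "1 - g > 0" using s2 by (simp add: g_def)
  have "measure_pmf.prob (random_triangular n p) {X. \<not> (\<exists>s<n. \<forall>w\<in>relators n X. \<not> gen_occurs s w)}
          \<le> 1 / \<mu> + 1 / q - 1"
    unfolding \<mu>_def q_def by (rule core) (use p0 p1 mupos in \<open>auto simp: \<mu>_def\<close>)
  also have "\<dots> \<le> 1 / f + 1 / (1 - g) - 1"
    using muf fpos qg g1 by (intro add_mono diff_right_mono divide_left_mono) (auto intro: mult_pos_pos)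
  finally have Z: "measure_pmf.prob (random_triangular n p) {X. \<not> (\<exists>s<n. \<forall>w\<in>relators n X. \<not> gen_occurs s w)}
          \<le> 1 / f + 1 / (1 - g) - 1" .
  have "measure_pmf.prob (random_triangular n p) {X. \<exists>s<n. \<forall>w\<in>relators n X. \<not> gen_occurs s w}
      = 1 - measure_pmf.prob (random_triangular n p) {X. \<not> (\<exists>s<n. \<forall>w\<in>relators n X. \<not> gen_occurs s w)}"
  proof -
    have e: "{X. \<exists>s<n. \<forall>w\<in>relators n X. \<not> gen_occurs s w} =
       space (measure_pmf (random_triangular n p)) - {X. \<not> (\<exists>s<n. \<forall>w\<in>relators n X. \<not> gen_occurs s w)}"
      by auto
    show ?thesis unfolding e by (rule measure_pmf.prob_compl) simp
  qed
  with Z show ?thesis unfolding f_def g_def by simp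
qed

theorem lemma3p6:
  fixes p :: "nat \<Rightarrow> real"
  assumes "\<And>n. 0 \<le> p n"
    and "\<forall>\<^sub>F n in sequentially. p n \<le> ln (real n) / (25 * (real n)\<^sup>2)"
  shows "(\<lambda>n. measure_pmf.prob (random_triangular n (p n))
            {X. \<exists>s<n. \<forall>w\<in>relators n X. \<not> gen_occurs s w}) \<longlonglongrightarrow> 1"
proof (rule tendsto_sandwich)
  define h where "h n = 2 - 1 / (real n * exp (- (48/49) * ln (real n))) - 1 / (1 - 48 * ln (real n) / (25 * real n))" for n :: nat
  have e1: "\<forall>\<^sub>F n in sequentially. ln (real n) / (25 * (real n)^2) \<le> 1/50"
    by real_asymp
  have e2: "\<forall>\<^sub>F n in sequentially. 48 * ln (real n) / (25 * real n) < 1"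
    by real_asymp
  have e3: "\<forall>\<^sub>F n in sequentially. n \<ge> (1::nat)"
    by (rule eventually_ge_at_top)
  show "\<forall>\<^sub>F n in sequentially. h n \<le> measure_pmf.prob (random_triangular n (p n))
            {X. \<exists>s<n. \<forall>w\<in>relators n X. \<not> gen_occurs s w}"
    using e1 e2 e3 assms(2)
  proof eventually_elim
    case (elim n)
    thus ?case unfolding h_def using per_n[of n "p n"] assms(1)[of n] by simp
  qed
  show "\<forall>\<^sub>F n in sequentially. measure_pmf.prob (random_triangular n (p n))
            {X. \<exists>s<n. \<forall>w\<in>relators n X. \<not> gen_occurs s w} \<le> 1"
    by simp
  show "(\<lambda>n. 1) \<longlonglongrightarrow> (1::real)" by simp
  show "h \<longlonglongrightarrow> 1" unfolding h_def by real_asymp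
qed

end
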